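(* Let $F_c(t)=\log\big(1+2c\sinh\frac{t}{2}\big)$. For $t\ge 0$ the following hold: (1) if $c\ge 1$, then $\frac{t}{t+1}\log c+\frac{t}{2}\le F_c(t)$; (2) if $c>0$, then $F_c(t)\le \log\Big(c+\frac{1}{4c}\Big)+\frac{t}{2}$. Equality holds in (1) if and only if $t=0$, and equality holds in (2) if and only if $c\ge\frac12$ and $t=2\log(2c)$. *)

theory Defs
  imports Complex_Main
begin

definition F :: "real \<Rightarrow> real \<Rightarrow> real" where
  "F c t = ln (1 + 2 * c * sinh (t / 2))"

end

theory Submission
  imports Defs "HOL-Analysis.Analysis"
begin

lemma key1:
  fixes c t x :: real
  assumes t: "t \<ge> 0" and c: "c \<ge> 1" and x: "x = exp (t/2)"
  shows "(1 + t/(t+1)*(c-1)) * x \<le> 1 + c * (x - 1/x)"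
    and "t > 0 \<Longrightarrow> (1 + t/(t+1)*(c-1)) * x < 1 + c * (x - 1/x)"
proof -
  have xp: "x > 0" using x by simp
  have x1: "x \<ge> 1" using x t by simp
  have xx: "x * x = exp t" using x by (simp flip: exp_add)
  have et: "exp t \<ge> 1 + t" by (rule exp_ge_add_one_self)
  have h: "x/(t+1) - 1/x \<ge> 0"
  proof -
    have "x/(t+1) - 1/x = (x*x - (t+1)) / ((t+1)*x)" using xp t by (simp add: field_simps add_pos_nonneg)
    also have "\<dots> \<ge> 0" using xx et xp t by (intro divide_nonneg_pos) (auto simp: add.commute)
    finally show ?thesis .
  qed
  have eq: "1 + c * (x - 1/x) - (1 + t/(t+1)*(c-1)) * x = (1 - 1/x) + (c-1)*(x/(t+1) - 1/x)"
  proof -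
    have "x + t*x > 0" using xp t by (simp add: add_pos_nonneg)
    then have nz: "x + t*x \<noteq> 0" "t + 1 \<noteq> 0" using t by auto
    have r: "\<And>u y. 1 + c * (x - y) - (1 + (1 - u)*(c-1)) * x = (1 - y) + (c-1)*(x*u - y)"
      by (simp add: algebra_simps)
    have "t/(t+1) = 1 - 1/(t+1)" "x/(t+1) = x * (1/(t+1))" using nz by (auto simp: field_simps)
    then show ?thesis using r by simp

  qed
  have "(c-1)*(x/(t+1) - 1/x) \<ge> 0" using c h by simp
  moreover have "1 - 1/x \<ge> 0" using x1 by simp
  ultimately show "(1 + t/(t+1)*(c-1)) * x \<le> 1 + c * (x - 1/x)" using eq by linarith
  assume "t > 0"
  then have "x > 1" using x by simp
  then have "1 - 1/x > 0" by simp
  with \<open>(c-1)*(x/(t+1) - 1/x) \<ge> 0\<close> show "(1 + t/(t+1)*(c-1)) * x < 1 + c * (x - 1/x)" using eq by linarith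
qed

lemma concl: "c \<ge> 1 \<Longrightarrow> 0 \<le> s \<Longrightarrow> s \<le> 1 \<Longrightarrow> s * ln (c::real) \<le> ln (1 + s*(c-1))"
proof -
  assume a: "c \<ge> 1" "0 \<le> s" "s \<le> 1"
  have "(1 - s) * ln 1 + s * ln c \<le> ln ((1 - s) *\<^sub>R 1 + s *\<^sub>R c)"
    using a by (intro concave_onD[OF ln_concave]) auto
  then show ?thesis by (simp add: algebra_simps)
qed

theorem lemma3p7:
  fixes c t :: real
  assumes "t \<ge> 0"
  shows "(c \<ge> 1 \<longrightarrow> t / (t + 1) * ln c + t / 2 \<le> F c t
            \<and> (t / (t + 1) * ln c + t / 2 = F c t \<longleftrightarrow> t = 0))
       \<and> (c > 0 \<longrightarrow> F c t \<le> ln (c + 1 / (4 * c)) + t / 2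
            \<and> (F c t = ln (c + 1 / (4 * c)) + t / 2 \<longleftrightarrow> c \<ge> 1 / 2 \<and> t = 2 * ln (2 * c)))"
proof -
  define x where "x = exp (t/2)"
  have xp: "x > 0" unfolding x_def by simp
  have x1: "x \<ge> 1" unfolding x_def using assms by simp
  have Fx: "F c t = ln (1 + c * (x - 1/x))"
    proof -
    have "1 + 2 * c * sinh (t / 2) = 1 + c * (x - 1/x)"
      unfolding x_def sinh_def by (simp add: exp_minus inverse_eq_divide)
    then show ?thesis unfolding F_def by (rule arg_cong[where f=ln])
  qed
  have lnx: "t/2 = ln x" unfolding x_def by simp
  have P1: "c \<ge> 1 \<longrightarrow> t / (t + 1) * ln c + t / 2 \<le> F c t
            \<and> (t / (t + 1) * ln c + t / 2 = F c t \<longleftrightarrow> t = 0)"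
  proof
    assume c: "c \<ge> 1"
    define s where "s = t/(t+1)"
    have s0: "0 \<le> s" "s \<le> 1" unfolding s_def using assms by auto
    have bp: "1 + s*(c-1) > 0" using s0 c by (smt (verit) mult_nonneg_nonneg)
    have a: "s * ln c + t/2 \<le> ln ((1 + s*(c-1)) * x)"
      using concl[OF c s0] lnx bp xp by (simp add: ln_mult)
    have k1: "(1 + s*(c-1)) * x \<le> 1 + c * (x - 1/x)"
      using key1(1)[OF assms c x_def] unfolding s_def .
    have le: "ln ((1 + s*(c-1)) * x) \<le> F c t"
      proof -
      have p1: "0 < 1 + c*(x-1/x)" using k1 mult_pos_pos[OF bp xp] by linarith
      have p2: "0 < (1 + s*(c-1)) * x" using mult_pos_pos[OF bp xp] .
      show ?thesis unfolding Fx using iffD2[OF ln_le_cancel_iff[OF p2 p1] k1] .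
    qed
    show "t / (t + 1) * ln c + t / 2 \<le> F c t
            \<and> (t / (t + 1) * ln c + t / 2 = F c t \<longleftrightarrow> t = 0)"
    proof (intro conjI iffI)
      show "t / (t + 1) * ln c + t / 2 \<le> F c t" using a le s_def by simp
    next
      assume eq: "t / (t + 1) * ln c + t / 2 = F c t"
      show "t = 0"
      proof (rule ccontr)
        assume "t \<noteq> 0"
        then have "t > 0" using assms by simp
        then have k2: "(1 + s*(c-1)) * x < 1 + c * (x - 1/x)"
          using key1(2)[OF assms c x_def] unfolding s_def by simp
        have "ln ((1 + s*(c-1)) * x) < F c t"
          proof -
      have p1: "0 < 1 + c*(x-1/x)" using k2 mult_pos_pos[OF bp xp] by linarith
      have p2: "0 < (1 + s*(c-1)) * x" using mult_pos_pos[OF bp xp] .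
      show ?thesis unfolding Fx using iffD2[OF ln_less_cancel_iff[OF p2 p1] k2] .
    qed
        then show False using a eq s_def by simp
      qed
    next
      assume "t = 0"
      then show "t / (t + 1) * ln c + t / 2 = F c t" by (simp add: F_def)
    qed
  qed
  have P2: "c > 0 \<longrightarrow> F c t \<le> ln (c + 1 / (4 * c)) + t / 2
            \<and> (F c t = ln (c + 1 / (4 * c)) + t / 2 \<longleftrightarrow> c \<ge> 1 / 2 \<and> t = 2 * ln (2 * c))"
  proof
    assume c: "c > 0"
    have Ap: "1 + c * (x - 1/x) > 0" using x1 c xp
      by (smt (verit, best) divide_le_eq_1_pos mult_nonneg_nonneg)
    have Bp: "(c + 1/(4*c)) * x > 0" using c xp by (intro mult_pos_pos add_pos_pos) auto
    have R: "ln (c + 1 / (4 * c)) + t / 2 = ln ((c + 1/(4*c)) * x)"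
    proof -
      have "c + 1/(4*c) > 0" using c by (intro add_pos_pos) auto
      then show ?thesis using lnx xp ln_mult by simp
    qed
    have diff: "(c + 1/(4*c)) * x - (1 + c * (x - 1/x)) = (x - 2*c)^2 / (4*c*x)"
      using c xp by (simp add: field_simps power2_eq_square)
    have ineq: "1 + c * (x - 1/x) \<le> (c + 1/(4*c)) * x"
      using diff c xp by (smt (verit) divide_nonneg_pos mult_pos_pos zero_le_power2)
    have iff: "(1 + c * (x - 1/x) = (c + 1/(4*c)) * x) \<longleftrightarrow> x = 2*c"
    proof
      assume "1 + c * (x - 1/x) = (c + 1/(4*c)) * x"
      then have "(x - 2*c)^2 / (4*c*x) = 0" using diff by simp
      then show "x = 2*c" using c xp by simp
    next
      assume "x = 2*c" then show "1 + c * (x - 1/x) = (c + 1/(4*c)) * x" using diff by simp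
    qed
    have x2c: "x = 2*c \<longleftrightarrow> c \<ge> 1/2 \<and> t = 2 * ln (2*c)"
    proof
      assume h: "x = 2*c"
      then have "c \<ge> 1/2" using x1 by simp
      moreover have "t = 2 * ln (2*c)" using lnx h by simp
      ultimately show "c \<ge> 1/2 \<and> t = 2 * ln (2*c)" by simp
    next
      assume "c \<ge> 1/2 \<and> t = 2 * ln (2*c)"
      then have "t/2 = ln (2*c)" by simp
      then show "x = 2*c" unfolding x_def using c by simp
    qed
    show "F c t \<le> ln (c + 1 / (4 * c)) + t / 2
            \<and> (F c t = ln (c + 1 / (4 * c)) + t / 2 \<longleftrightarrow> c \<ge> 1 / 2 \<and> t = 2 * ln (2 * c))"
      unfolding Fx R using ineq Ap Bp iff x2c by (simp add: ln_inj_iff)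
  qed
  show ?thesis using P1 P2 by blast
qed

end
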